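(* Let $n\geq 1$, let $\alpha,\beta,d\in\mathbb{Z}$ with $1\leq d\leq n$, and consider the complete graph $K_n$ with an initial configuration $c_0$ in which $d$ of the vertices receive $\alpha$ chips and the remaining $n-d$ vertices receive $\beta$ chips. Then this configuration is tight, i.e. there exists $t\geq 0$ with $c_{t+2}=c_t$.
   Context: Diffusion process: for a finite simple graph $G$ and a chip configuration $c_t:V(G)\to\mathbb{Z}$ (negative values allowed), the next configuration is defined simultaneously for every vertex $u$ by $c_{t+1}(u)=c_t(u)-|\{w\in N(u): c_t(u)>c_t(w)\}|+|\{w\in N(u): c_t(u)<c_t(w)\}|$. A graph with initial configuration is tight if the process is eventually fixed or eventually periodic with period length $2$, equivalently $c_{t+2}=c_t$ for some $t\geq0$. *)

theory Defs
  imports Main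
begin

text \<open>A finite simple graph is given by a finite vertex set V and a symmetric,
irreflexive adjacency relation E.  Configurations are functions into int
(values outside V are irrelevant).\<close>

definition neighbours :: "'a set \<Rightarrow> ('a \<Rightarrow> 'a \<Rightarrow> bool) \<Rightarrow> 'a \<Rightarrow> 'a set" where
  "neighbours V E u = {w \<in> V. E u w}"

definition diffusion_step :: "'a set \<Rightarrow> ('a \<Rightarrow> 'a \<Rightarrow> bool) \<Rightarrow> ('a \<Rightarrow> int) \<Rightarrow> ('a \<Rightarrow> int)" where
  "diffusion_step V E c = (\<lambda>u. c u
      - int (card {w \<in> neighbours V E u. c u > c w})
      + int (card {w \<in> neighbours V E u. c u < c w}))"

definition diffusion :: "'a set \<Rightarrow> ('a \<Rightarrow> 'a \<Rightarrow> bool) \<Rightarrow> ('a \<Rightarrow> int) \<Rightarrow> nat \<Rightarrow> ('a \<Rightarrow> int)" where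
  "diffusion V E c0 t = (diffusion_step V E ^^ t) c0"

definition tight :: "'a set \<Rightarrow> ('a \<Rightarrow> 'a \<Rightarrow> bool) \<Rightarrow> ('a \<Rightarrow> int) \<Rightarrow> bool" where
  "tight V E c0 \<longleftrightarrow> (\<exists>t. \<forall>v\<in>V. diffusion V E c0 (t + 2) v = diffusion V E c0 t v)"

definition complete_adj :: "nat \<Rightarrow> nat \<Rightarrow> bool" where
  "complete_adj u v \<longleftrightarrow> u \<noteq> v"

end

theory Submission
  imports Defs
begin

definition ff :: "nat \<Rightarrow> nat \<Rightarrow> int \<times> int \<Rightarrow> int \<times> int" where
  "ff d n p = (let a = fst p; b = snd p in
     if a > b then (a - int (n - d), b + int d)
     else if a < b then (a + int (n - d), b - int d) else (a, b))"

lemma step_two: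
  assumes DV: "D \<subseteq> {0..<n}" and cD: "card D = d"
    and cv: "\<forall>v\<in>{0..<n}. c v = (if v \<in> D then a else b)"
    and v: "v \<in> {0..<n}"
  shows "diffusion_step {0..<n} complete_adj c v =
     (if v \<in> D then fst (ff d n (a,b)) else snd (ff d n (a,b)))"
proof -
  let ?V = "{0..<n::nat}"
  have nb: "neighbours ?V complete_adj v = ?V - {v}"
    unfolding neighbours_def complete_adj_def by auto
  have fD: "finite D" using DV finite_subset by blast
  have cVD: "card (?V - D) = n - d" using DV cD fD by (simp add: card_Diff_subset)
  show ?thesis
  proof (cases "v \<in> D")
    case True
    have s1: "{w \<in> ?V - {v}. c v > c w} = (if a > b then ?V - D else {})"
      using cv v True by auto
    have s2: "{w \<in> ?V - {v}. c v < c w} = (if a < b then ?V - D else {})"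
      using cv v True by auto
    show ?thesis using True cv v unfolding diffusion_step_def nb s1 s2 ff_def
      by (auto simp: cVD Let_def)
  next
    case False
    have s1: "{w \<in> ?V - {v}. c v > c w} = (if b > a then D else {})"
      using cv v False DV by (auto split: if_splits)
    have s2: "{w \<in> ?V - {v}. c v < c w} = (if b < a then D else {})"
      using cv v False DV by (auto split: if_splits)
    show ?thesis using False cv v unfolding diffusion_step_def nb s1 s2 ff_def
      by (auto simp: cD Let_def)
  qed
qed

lemma diff_two:
  assumes DV: "D \<subseteq> {0..<n}" and cD: "card D = d"
    and cv: "\<forall>v\<in>{0..<n}. c0 v = (if v \<in> D then a else b)"
  shows "\<forall>v\<in>{0..<n}. diffusion {0..<n} complete_adj c0 t v =
     (if v \<in> D then fst ((ff d n ^^ t) (a,b)) else snd ((ff d n ^^ t) (a,b)))"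
proof (induction t)
  case 0
  then show ?case using cv by (simp add: diffusion_def)
next
  case (Suc t)
  have e: "diffusion {0..<n} complete_adj c0 (Suc t) =
     diffusion_step {0..<n} complete_adj (diffusion {0..<n} complete_adj c0 t)"
    by (simp add: diffusion_def)
  show ?case
  proof
    fix v assume v: "v \<in> {0..<n}"
    have "diffusion_step {0..<n} complete_adj (diffusion {0..<n} complete_adj c0 t) v
      = (if v \<in> D then fst (ff d n (fst ((ff d n ^^ t) (a,b)), snd ((ff d n ^^ t) (a,b))))
          else snd (ff d n (fst ((ff d n ^^ t) (a,b)), snd ((ff d n ^^ t) (a,b)))))"
      by (rule step_two[OF DV cD Suc v])
    then show "diffusion {0..<n} complete_adj c0 (Suc t) v =
     (if v \<in> D then fst ((ff d n ^^ Suc t) (a,b)) else snd ((ff d n ^^ Suc t) (a,b)))"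
      by (simp add: e)
  qed
qed

lemma ff_period:
  assumes "n \<ge> 1" "d \<le> n"
  shows "\<exists>t. (ff d n ^^ (t+2)) p = (ff d n ^^ t) p"
proof (induction "nat \<bar>fst p - snd p\<bar>" arbitrary: p rule: less_induct)
  case less
  obtain a b where p: "p = (a,b)" by (cases p)
  show ?case
  proof (cases "\<bar>a - b\<bar> < int n")
    case True
    have "(ff d n ^^ 2) p = p" using True assms
      by (auto simp: p ff_def Let_def numeral_2_eq_2)
    then show ?thesis by (intro exI[of _ 0]) (simp add: numeral_2_eq_2)
  next
    case False
    have "nat \<bar>fst (ff d n p) - snd (ff d n p)\<bar> < nat \<bar>fst p - snd p\<bar>"
      using False assms by (auto simp: p ff_def Let_def)
    from less[OF this] obtain t where t: "(ff d n ^^ (t+2)) (ff d n p) = (ff d n ^^ t) (ff d n p)"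
      by blast
    have "(ff d n ^^ (Suc t+2)) p = (ff d n ^^ Suc t) p"
      using t by (simp only: funpow_Suc_right o_apply add_Suc)
    then show ?thesis by blast
  qed
qed

theorem theorem17:
  fixes n d :: nat and \<alpha> \<beta> :: int and D :: "nat set" and c0 :: "nat \<Rightarrow> int"
  assumes "n \<ge> 1" and "1 \<le> d" and "d \<le> n"
    and "D \<subseteq> {0..<n}" and "card D = d"
    and "\<And>v. v \<in> D \<Longrightarrow> c0 v = \<alpha>"
    and "\<And>v. v \<in> {0..<n} - D \<Longrightarrow> c0 v = \<beta>"
  shows "tight {0..<n} complete_adj c0"
proof -
  have cv: "\<forall>v\<in>{0..<n}. c0 v = (if v \<in> D then \<alpha> else \<beta>)" using assms(6,7) by auto
  obtain t where t: "(ff d n ^^ (t+2)) (\<alpha>,\<beta>) = (ff d n ^^ t) (\<alpha>,\<beta>)"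
    using ff_period[OF assms(1,3)] by blast
  show ?thesis unfolding tight_def
    using diff_two[OF assms(4,5) cv, of t] diff_two[OF assms(4,5) cv, of "t+2"] t
    by (intro exI[of _ t]) auto
qed

end
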